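(* Let $k=4$, $t\ge 2$, $m=2^t-3$, and let $n$ be an integer with $0\le n\le m$, $i=m-n$. Then in $\mathbb{F}_2[w_2,w_3,w_4]$, \[ q_iq_n+q_{i+1}q_{n-1}+(q_{i+2}+w_2q_i)q_{n-2}+(q_{i+3}+w_2q_{i+1}+w_3q_i)q_{n-3}=0, \] a homogeneous relation of degree $2^t-3$ among $q_{n-3},\dots,q_n$.
   Context: In $\mathbb{F}_2[w_2,w_3,w_4]$ ($\deg w_i=i$), $q_0=1$, $q_m=0$ for $m<0$, and $q_m=w_2q_{m-2}+w_3q_{m-3}+w_4q_{m-4}$ for $m\ge1$. *)

theory Defs
  imports "HOL-Library.Z2" "HOL-Computational_Algebra.Polynomial"
begin

text \<open>F_2[w2,w3,w4] rendered as iterated univariate polynomials over F_2 (type bit):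
  outermost variable w4, then w3, innermost w2.\<close>

type_synonym F2w = "bit poly poly poly"

definition w2 :: F2w where "w2 = [:[:[:0, 1:]:]:]"
definition w3 :: F2w where "w3 = [:[:0, 1:]:]"
definition w4 :: F2w where "w4 = [:0, 1:]"

fun qn :: "nat \<Rightarrow> F2w" where
  "qn n = (if n = 0 then 1 else
     (if n \<ge> 2 then w2 * qn (n - 2) else 0)
   + (if n \<ge> 3 then w3 * qn (n - 3) else 0)
   + (if n \<ge> 4 then w4 * qn (n - 4) else 0))"

definition q :: "int \<Rightarrow> F2w" where
  "q m = (if m < 0 then 0 else qn (nat m))"

end

theory Submission
  imports Defs
begin

declare qn.simps[simp del]

lemma two_poly: "(1::'a::comm_ring_1) + 1 = 0 \<Longrightarrow> (1::'a poly) + 1 = 0"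
  by (simp add: one_pCons add_pCons del: pCons_one)

lemma two0: "(1::F2w) + 1 = 0"
  by (intro two_poly) simp

lemma add_self: "(x::F2w) + x = 0"
  by (metis two0 distrib_left mult_1_right mult_zero_right)

lemma add_self2: "(x::F2w) + (x + y) = y"
  by (metis add.assoc add_self add_0)

lemma q_neg: "k < 0 \<Longrightarrow> q k = 0"
  by (simp add: q_def)

lemma q_0: "q 0 = 1"
  unfolding q_def by (subst qn.simps) simp

lemma q_rec: assumes "k \<ge> 1"
  shows "q k = w2 * q (k - 2) + w3 * q (k - 3) + w4 * q (k - 4)"
proof -
  have "qn (nat k) = (if nat k \<ge> 2 then w2 * qn (nat k - 2) else 0)
   + (if nat k \<ge> 3 then w3 * qn (nat k - 3) else 0)
   + (if nat k \<ge> 4 then w4 * qn (nat k - 4) else 0)"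
    using assms by (subst qn.simps) simp
  moreover have "nat (k-2) = nat k - 2" "nat (k-3) = nat k - 3" "nat (k-4) = nat k - 4"
    by auto
  ultimately show ?thesis using assms unfolding q_def
    by (auto simp: not_le)
qed

definition PA :: "int \<Rightarrow> bool" where
  "PA k \<longleftrightarrow> q (2*k) = q k ^ 2 + w2 * q (k-1) ^ 2 + w4 * q (k-2) ^ 2
     \<and> q (2*k+1) = w3 * q (k-1) ^ 2"

lemma PA_all: "\<forall>k. k < int N \<longrightarrow> PA k"
proof (induction N)
  case 0
  then show ?case by (auto simp: PA_def q_neg)
next
  case (Suc N)
  show ?case
  proof (intro allI impI)
    fix k assume k: "k < int (Suc N)"
    show "PA k"
    proof (cases "k < int N")
      case True then show ?thesis using Suc by auto
    next
      case False
      then have kN: "k = int N" using k by auto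
      show ?thesis
      proof (cases "k = 0")
        case True
        have "q 1 = 0" using q_rec[of 1] by (simp add: q_neg)
        then show ?thesis using True by (simp add: PA_def q_0 q_neg)
      next
        case False
        then have k1: "k \<ge> 1" using kN by auto
        have I1: "PA (k-1)" and I2: "PA (k-2)" using Suc kN by auto
        have e1: "q (2*k) = w2 * q (2*(k-1)) + w3 * q (2*(k-2)+1) + w4 * q (2*(k-2))"
          using q_rec[of "2*k"] k1 by (simp add: algebra_simps)
        have e2: "q (2*k+1) = w2 * q (2*(k-1)+1) + w3 * q (2*(k-1)) + w4 * q (2*(k-2)+1)"
          using q_rec[of "2*k+1"] k1 by (simp add: algebra_simps)
        have e3: "q k = w2 * q (k - 2) + w3 * q (k - 3) + w4 * q (k - 4)"
          using q_rec k1 by auto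
        have a1: "q (2*(k-1)) = q (k-1) ^ 2 + w2 * q (k-2) ^ 2 + w4 * q (k-3) ^ 2"
          "q (2*(k-1)+1) = w3 * q (k-2) ^ 2"
          using I1 by (auto simp: PA_def algebra_simps)
        have a2: "q (2*(k-2)) = q (k-2) ^ 2 + w2 * q (k-3) ^ 2 + w4 * q (k-4) ^ 2"
          "q (2*(k-2)+1) = w3 * q (k-3) ^ 2"
          using I2 by (auto simp: PA_def algebra_simps)
        have c2: "(1::F2w) + 1 = 0" by (rule two0)
        show ?thesis unfolding PA_def e1 e2 a1 a2 e3
          by (simp add: algebra_simps power2_eq_square add_self add_self2)
      qed
    qed
  qed
qed

lemma q_odd: "q (2*k+1) = w3 * q (k-1) ^ 2"
  using PA_all[of "nat (k+1)"] by (auto simp: PA_def)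

lemma q_special: "q (2 ^ t - 3) = 0"
proof (induction t)
  case 0 then show ?case by (simp add: q_neg)
next
  case (Suc t)
  have "(2::int) ^ Suc t - 3 = 2 * (2 ^ t - 2) + 1" by simp
  then show ?case using q_odd[of "2 ^ t - 2"] Suc by simp
qed

definition G :: "int \<Rightarrow> int \<Rightarrow> F2w" where
  "G m n = q (m-n) * q n + q (m-n+1) * q (n-1) + (q (m-n+2) + w2 * q (m-n)) * q (n-2)
         + (q (m-n+3) + w2 * q (m-n+1) + w3 * q (m-n)) * q (n-3)"

lemma G_step: assumes "0 \<le> n" "n + 1 \<le> m + 3"
  shows "G m (n+1) = G m n"
proof -
  have r1: "q (n+1) = w2 * q (n-1) + w3 * q (n-2) + w4 * q (n-3)"
    using q_rec[of "n+1"] assms by (simp add: algebra_simps)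
  have r2: "q (m-n+3) = w2 * q (m-n+1) + w3 * q (m-n) + w4 * q (m-n-1)"
    using q_rec[of "m-n+3"] assms by (simp add: algebra_simps)
  have x: "m - (n+1) = m-n-1" "m - (n+1) + 1 = m-n" "m - (n+1) + 2 = m-n+1"
    "m - (n+1) + 3 = m-n+2" "n+1-1 = n" "n+1-2 = n-1" "n+1-3 = n-2" by auto
  have c2: "(1::F2w) + 1 = 0" by (rule two0)
  show ?thesis unfolding G_def x r1 r2 by (simp add: algebra_simps power2_eq_square add_self add_self2)
qed

lemma G_all: assumes "m \<ge> 0" shows "0 \<le> n \<Longrightarrow> n \<le> m \<Longrightarrow> G m n = q m"
proof (induction n rule: int_ge_induct[where k=0, case_names base step])
  case base
  then show ?case by (simp add: G_def q_neg q_0)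
next
  case (step n)
  then show ?case using G_step[of n m] by simp
qed

theorem mainTheorem10:
  fixes t :: nat and n m i :: int
  assumes "t \<ge> 2"
    and "m = 2 ^ t - 3"
    and "0 \<le> n" and "n \<le> m"
    and "i = m - n"
  shows "q i * q n + q (i + 1) * q (n - 1) + (q (i + 2) + w2 * q i) * q (n - 2)
         + (q (i + 3) + w2 * q (i + 1) + w3 * q i) * q (n - 3) = 0"
proof -
  have "G m n = q m" using G_all assms by auto
  also have "\<dots> = 0" using q_special assms by simp
  finally show ?thesis using assms by (simp add: G_def)
qed

end
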